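(* Let $I=\langle N,M,V\rangle$ be an ordered instance of goods and let $B\subseteq M$ be a bundle with $v_i(B)\ge\mu_i$ for some agent $i\in N$. If every agent $i'\in N\setminus\{i\}$ has an MMS partition containing a bundle $B_{i'}$ with $B_{i'}\succeq B$, then allocating $B$ to $i$ is a valid reduction.
   Context: An instance $I=\langle N,M,V\rangle$ has agents $N=\{1,\dots,n\}$, goods $M=\{1,\dots,m\}$ and additive valuations $v_i$ with $v_i(\emptyset)=0$, $v_i(S)=\sum_{g\in S}v_i(\{g\})$, $v_{ij}:=v_i(\{j\})\ge 0$. It is ordered if $v_{ij}\ge v_{i(j+1)}$ for all $i$ and $1\le j<m$. An allocation ($n$-partition) is an ordered $n$-tuple of pairwise disjoint, possibly empty subsets of $M$ with union $M$. The maximin share of $i$ in $I$ is $\mu_i=\mu_i^I=\max_A\min_j v_i(A_j)$ over all allocations $A$; an MMS partition of $i$ is an allocation $A$ with $v_i(A_j)\ge\mu_i$ for all $j$. For $B,B'\subseteq M$, $B$ dominates $B'$, written $B\succeq B'$, if there is an injective map $f:B'\to B$ with $f(j)\le j$ for all $j\in B'$. Removing agents $N'\subseteq N$ and items $M'\subseteq M$ is a valid reduction if the items of $M'$ can be allocated to the agents of $N'$ so that each $i'\in N'$ receives a bundle $B_{i'}$ with $v_{i'}(B_{i'})\ge\mu_{i'}^I$, and every $i\in N\setminus N'$ satisfies $\mu_i^{I'}\ge\mu_i^I$, where $I'=\langle N\setminus N', M\setminus M', V\rangle$ (valuations restricted, maximin share computed with $|N\setminus N'|$ bundles). "Allocating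 $B$ to $i$ is a valid reduction" means this holds with $N'=\{i\}$, $M'=B$. *)

theory Defs
  imports Complex_Main
begin

(* Agents are 1..n, goods are 1..m (natural numbers); a valuation profile is
   v :: nat => nat => real with v i j = v_i({j}); additive: v_i(S) = sum (v i) S. *)

definition val :: "(nat \<Rightarrow> nat \<Rightarrow> real) \<Rightarrow> nat \<Rightarrow> nat set \<Rightarrow> real" where
  "val v i S = sum (v i) S"

definition ordered_instance :: "nat \<Rightarrow> nat \<Rightarrow> (nat \<Rightarrow> nat \<Rightarrow> real) \<Rightarrow> bool" where
  "ordered_instance n m v \<longleftrightarrow>
     (\<forall>i\<in>{1..n}. \<forall>j\<in>{1..m}. v i j \<ge> 0) \<and>
     (\<forall>i\<in>{1..n}. \<forall>j. 1 \<le> j \<and> j < m \<longrightarrow> v i j \<ge> v i (j + 1))"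

definition is_partition :: "nat \<Rightarrow> nat set \<Rightarrow> (nat \<Rightarrow> nat set) \<Rightarrow> bool" where
  "is_partition k S A \<longleftrightarrow>
     (\<forall>j\<in>{1..k}. A j \<subseteq> S) \<and>
     (\<forall>j\<in>{1..k}. \<forall>j'\<in>{1..k}. j \<noteq> j' \<longrightarrow> A j \<inter> A j' = {}) \<and>
     (\<Union>j\<in>{1..k}. A j) = S"

definition mms :: "(nat \<Rightarrow> nat \<Rightarrow> real) \<Rightarrow> nat \<Rightarrow> nat \<Rightarrow> nat set \<Rightarrow> real" where
  "mms v i k S = Max {Min ((\<lambda>j. val v i (A j)) ` {1..k}) | A. is_partition k S A}"

definition mms_partition :: "(nat \<Rightarrow> nat \<Rightarrow> real) \<Rightarrow> nat \<Rightarrow> nat \<Rightarrow> nat set \<Rightarrow> (nat \<Rightarrow> nat set) \<Rightarrow> bool" where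
  "mms_partition v i k S A \<longleftrightarrow> is_partition k S A \<and> (\<forall>j\<in>{1..k}. val v i (A j) \<ge> mms v i k S)"

definition dominates :: "nat set \<Rightarrow> nat set \<Rightarrow> bool" where
  "dominates B B' \<longleftrightarrow> (\<exists>f. inj_on f B' \<and> f ` B' \<subseteq> B \<and> (\<forall>j\<in>B'. f j \<le> j))"

definition valid_reduction :: "nat \<Rightarrow> nat \<Rightarrow> (nat \<Rightarrow> nat \<Rightarrow> real) \<Rightarrow> nat set \<Rightarrow> nat set \<Rightarrow> bool" where
  "valid_reduction n m v N' M' \<longleftrightarrow>
     N' \<subseteq> {1..n} \<and> M' \<subseteq> {1..m} \<and>
     (\<exists>Bs. (\<forall>a\<in>N'. Bs a \<subseteq> M') \<and>
           (\<forall>a\<in>N'. \<forall>a'\<in>N'. a \<noteq> a' \<longrightarrow> Bs a \<inter> Bs a' = {}) \<and>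
           (\<Union>a\<in>N'. Bs a) = M' \<and>
           (\<forall>a\<in>N'. val v a (Bs a) \<ge> mms v a n {1..m})) \<and>
     (\<forall>a\<in>{1..n} - N'. mms v a (n - card N') ({1..m} - M') \<ge> mms v a n {1..m})"

end

theory Submission
  imports Defs "HOL-Library.FuncSet"
begin

lemma dom_swap:
  fixes B A :: "nat set"
  assumes "finite B" "inj_on f B" "f ` B \<subseteq> A" "\<forall>x\<in>B. f x \<le> x"
  shows "\<exists>g. inj_on g (B - A) \<and> g ` (B - A) \<subseteq> A - B \<and> (\<forall>x\<in>B - A. g x \<le> x)"
  using assms
proof (induction "card B" arbitrary: B A f rule: less_induct)
  case less
  show ?case
  proof (cases "B \<inter> A = {}")
    case True
    then show ?thesis using less.prems
      by (rule_tac x=f in exI) (auto simp: inj_on_def)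
  next
    case False
    then obtain c where c: "c \<in> B" "c \<in> A" by blast
    define f' where "f' x = (if f x = c then f c else f x)" for x
    have card: "card (B - {c}) < card B" using c less.prems(1)
      by (meson card_Diff1_less)
    have inj': "inj_on f' (B - {c})"
      using less.prems(2) c unfolding f'_def inj_on_def
      by (smt (verit) DiffE insertI1)
    have img': "f' ` (B - {c}) \<subseteq> A - {c}"
    proof
      fix y assume "y \<in> f' ` (B - {c})"
      then obtain x where x: "x \<in> B" "x \<noteq> c" "y = f' x" by auto
      show "y \<in> A - {c}"
      proof (cases "f x = c")
        case True
        then have "f c \<noteq> c" using x less.prems(2) c unfolding inj_on_def by metis
        then show ?thesis using True x c less.prems(3) unfolding f'_def by auto
      next
        case False
        then show ?thesis using x less.prems(3) unfolding f'_def by auto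
      qed
    qed
    have le': "\<forall>x\<in>B - {c}. f' x \<le> x"
    proof
      fix x assume x: "x \<in> B - {c}"
      show "f' x \<le> x"
      proof (cases "f x = c")
        case True
        then have "f c \<le> c" "c \<le> x" using less.prems(4) x c by force+
        then show ?thesis using True unfolding f'_def by simp
      next
        case False
        then show ?thesis using x less.prems(4) unfolding f'_def by auto
      qed
    qed
    obtain g where g: "inj_on g (B - {c} - (A - {c}))"
      "g ` (B - {c} - (A - {c})) \<subseteq> A - {c} - (B - {c})"
      "\<forall>x\<in>B - {c} - (A - {c}). g x \<le> x"
      using less.hyps[OF card _ inj' img' le'] less.prems(1) by auto
    have e1: "B - {c} - (A - {c}) = B - A" using c by auto
    have e2: "A - {c} - (B - {c}) = A - B" using c by auto
    show ?thesis using g unfolding e1 e2 by blast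
  qed
qed

lemma ordered_mono:
  assumes "ordered_instance n m v" "a \<in> {1..n}" "1 \<le> x" "x \<le> y" "y \<le> m"
  shows "v a y \<le> v a x"
  using assms(4,5)
proof (induction y rule: dec_induct)
  case base
  then show ?case by simp
next
  case (step k)
  then have "v a (k + 1) \<le> v a k" using assms(1,2,3) unfolding ordered_instance_def by auto
  then show ?case using step by simp
qed

lemma mms_ge:
  assumes "finite S" "is_partition k S C" "k \<ge> 1"
    "\<forall>j\<in>{1..k}. val v i (C j) \<ge> t"
  shows "mms v i k S \<ge> t"
proof -
  let ?F = "\<lambda>A. Min ((\<lambda>j. val v i (A j)) ` {1..k})"
  have sub: "{?F A | A. is_partition k S A} \<subseteq> ?F ` (PiE {1..k} (\<lambda>_. Pow S))"
  proof
    fix y assume "y \<in> {?F A | A. is_partition k S A}"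
    then obtain A where A: "is_partition k S A" "y = ?F A" by auto
    have "restrict A {1..k} \<in> PiE {1..k} (\<lambda>_. Pow S)"
      using A(1) unfolding is_partition_def by auto
    moreover have "(\<lambda>j. val v i (restrict A {1..k} j)) ` {1..k} = (\<lambda>j. val v i (A j)) ` {1..k}"
      by (rule image_cong) auto
    then have "y = ?F (restrict A {1..k})" using A(2) by simp
    ultimately show "y \<in> ?F ` (PiE {1..k} (\<lambda>_. Pow S))" by blast
  qed
  have fin: "finite {?F A | A. is_partition k S A}"
    by (rule finite_subset[OF sub]) (simp add: finite_PiE assms(1))
  have mem: "?F C \<in> {?F A | A. is_partition k S A}" using assms(2) by blast
  have "t \<le> ?F C" using assms(3,4) by (simp add: Min_ge_iff)
  also have "\<dots> \<le> Max {?F A | A. is_partition k S A}" using fin mem by (rule Max_ge)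
  finally show ?thesis unfolding mms_def .
qed

lemma disj_helper:
  fixes X1 X2 J G1 G2 L1 L2 :: "nat set"
  shows "X1 \<inter> X2 = {} \<Longrightarrow> X1 \<inter> J = {} \<Longrightarrow> X2 \<inter> J = {} \<Longrightarrow> G1 \<subseteq> J \<Longrightarrow> G2 \<subseteq> J \<Longrightarrow>
    L1 \<subseteq> J \<Longrightarrow> L2 \<subseteq> J \<Longrightarrow> G1 \<inter> G2 = {} \<Longrightarrow> L1 \<inter> G2 = {} \<Longrightarrow> L2 \<inter> G1 = {} \<Longrightarrow> L1 \<inter> L2 = {} \<Longrightarrow>
    (X1 \<union> G1 \<union> L1) \<inter> (X2 \<union> G2 \<union> L2) = {}"
  by blast

theorem lemma11:
  fixes n m :: nat and v :: "nat \<Rightarrow> nat \<Rightarrow> real" and i :: nat and B :: "nat set"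
  assumes "ordered_instance n m v"
    and "i \<in> {1..n}"
    and "B \<subseteq> {1..m}"
    and "val v i B \<ge> mms v i n {1..m}"
    and "\<forall>i'\<in>{1..n} - {i}. \<exists>A. mms_partition v i' n {1..m} A \<and>
            (\<exists>j\<in>{1..n}. dominates (A j) B)"
  shows "valid_reduction n m v {i} B"
proof -
  have red: "mms v a (n - 1) ({1..m} - B) \<ge> mms v a n {1..m}" if a: "a \<in> {1..n} - {i}" for a
  proof -
    have n2: "n \<ge> 2" using a assms(2) by auto
    obtain A j where A: "mms_partition v a n {1..m} A" and j: "j \<in> {1..n}"
      and dom: "dominates (A j) B" using assms(5) a by blast
    have part: "is_partition n {1..m} A" and Aval: "\<forall>k\<in>{1..n}. val v a (A k) \<ge> mms v a n {1..m}"
      using A unfolding mms_partition_def by auto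
    have Asub: "\<And>k. k \<in> {1..n} \<Longrightarrow> A k \<subseteq> {1..m}" using part unfolding is_partition_def by auto
    have Adisj: "\<And>k k'. k \<in> {1..n} \<Longrightarrow> k' \<in> {1..n} \<Longrightarrow> k \<noteq> k' \<Longrightarrow> A k \<inter> A k' = {}"
      using part unfolding is_partition_def by auto
    have Aun: "(\<Union>k\<in>{1..n}. A k) = {1..m}" using part unfolding is_partition_def by auto
    obtain f where f: "inj_on f B" "f ` B \<subseteq> A j" "\<forall>x\<in>B. f x \<le> x"
      using dom unfolding dominates_def by auto
    have finB: "finite B" using assms(3) finite_subset by blast
    obtain g where g: "inj_on g (B - A j)" "g ` (B - A j) \<subseteq> A j - B" "\<forall>x\<in>B - A j. g x \<le> x"
      using dom_swap[OF finB f] by blast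
    define L where "L = (A j - B) - g ` (B - A j)"
    define \<sigma> where "\<sigma> k = (if k = j then n else k)" for k
    define C where "C k = (A (\<sigma> k) - B) \<union> g ` (A (\<sigma> k) \<inter> B) \<union> (if k = 1 then L else {})" for k
    have \<sigma>in: "\<sigma> k \<in> {1..n}" "\<sigma> k \<noteq> j" if "k \<in> {1..n-1}" for k
      using that j n2 unfolding \<sigma>_def by auto
    have \<sigma>inj: "\<sigma> k \<noteq> \<sigma> k'" if "k \<in> {1..n-1}" "k' \<in> {1..n-1}" "k \<noteq> k'" for k k'
      using that j unfolding \<sigma>_def by auto
    have AB: "A (\<sigma> k) \<inter> B \<subseteq> B - A j" if "k \<in> {1..n-1}" for k
      using Adisj[OF \<sigma>in(1)[OF that] j \<sigma>in(2)[OF that]] by auto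
    have gsub: "g ` (A (\<sigma> k) \<inter> B) \<subseteq> A j - B" if "k \<in> {1..n-1}" for k
      using AB[OF that] g(2) by blast
    have Lsub: "L \<subseteq> A j - B" unfolding L_def by auto
    have Csub: "C k \<subseteq> {1..m} - B" if "k \<in> {1..n-1}" for k
      using Asub[OF \<sigma>in(1)[OF that]] Asub[OF j] gsub[OF that] Lsub unfolding C_def by (intro Un_least) (auto split: if_splits)
    have isp: "is_partition (n - 1) ({1..m} - B) C"
      unfolding is_partition_def
    proof (intro conjI ballI impI)
      fix k assume "k \<in> {1..n-1}" then show "C k \<subseteq> {1..m} - B" by (rule Csub)
    next
      fix k k' assume k: "k \<in> {1..n-1}" and k': "k' \<in> {1..n-1}" and kk: "k \<noteq> k'"
      have d1: "A (\<sigma> k) \<inter> A (\<sigma> k') = {}" using Adisj \<sigma>in k k' \<sigma>inj kk by blast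
      have d2: "A (\<sigma> k) \<inter> A j = {}" "A (\<sigma> k') \<inter> A j = {}"
        using Adisj \<sigma>in k k' j by blast+
      have d3: "g ` (A (\<sigma> k) \<inter> B) \<inter> g ` (A (\<sigma> k') \<inter> B) = {}"
      proof -
        have "inj_on g ((A (\<sigma> k) \<inter> B) \<union> (A (\<sigma> k') \<inter> B))"
          using g(1) AB[OF k] AB[OF k'] by (meson inj_on_subset le_supI)
        then have "g ` ((A (\<sigma> k) \<inter> B) \<inter> (A (\<sigma> k') \<inter> B)) = g ` (A (\<sigma> k) \<inter> B) \<inter> g ` (A (\<sigma> k') \<inter> B)"
          by (rule inj_on_image_Int) auto
        moreover have "(A (\<sigma> k) \<inter> B) \<inter> (A (\<sigma> k') \<inter> B) = {}" using d1 by blast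
        ultimately show ?thesis by simp
      qed
      have d4: "L \<inter> g ` (A (\<sigma> k) \<inter> B) = {}" "L \<inter> g ` (A (\<sigma> k') \<inter> B) = {}"
        unfolding L_def using AB[OF k] AB[OF k'] by blast+
      have gk: "g ` (A (\<sigma> k) \<inter> B) \<subseteq> A j" "g ` (A (\<sigma> k') \<inter> B) \<subseteq> A j"
        using gsub[OF k] gsub[OF k'] by blast+
      have Lk: "(if k = 1 then L else {}) \<subseteq> A j" "(if k' = 1 then L else {}) \<subseteq> A j"
        using Lsub by auto
      have LL: "(if k = 1 then L else {}) \<inter> (if k' = 1 then L else {}) = {}" using kk by simp
      have LG: "(if k = 1 then L else {}) \<inter> g ` (A (\<sigma> k') \<inter> B) = {}"
        "(if k' = 1 then L else {}) \<inter> g ` (A (\<sigma> k) \<inter> B) = {}"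
        using d4 by auto
      have X: "(A (\<sigma> k) - B) \<inter> (A (\<sigma> k') - B) = {}" "(A (\<sigma> k) - B) \<inter> A j = {}"
        "(A (\<sigma> k') - B) \<inter> A j = {}" using d1 d2 by blast+
      show "C k \<inter> C k' = {}"
        unfolding C_def by (rule disj_helper[OF X gk Lk d3 LG LL])
    next
      show "(\<Union>k\<in>{1..n-1}. C k) = {1..m} - B"
      proof
        show "(\<Union>k\<in>{1..n-1}. C k) \<subseteq> {1..m} - B" using Csub by blast
      next
        have pre: "\<exists>k'\<in>{1..n-1}. \<sigma> k' = k" if "k \<in> {1..n}" "k \<noteq> j" for k
        proof (cases "k = n")
          case True
          then show ?thesis using that j unfolding \<sigma>_def by (rule_tac x=j in bexI) auto
        next
          case False
          then show ?thesis using that j unfolding \<sigma>_def by (rule_tac x=k in bexI) auto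
        qed
        show "{1..m} - B \<subseteq> (\<Union>k\<in>{1..n-1}. C k)"
        proof
          fix x assume x: "x \<in> {1..m} - B"
          then obtain k where k: "k \<in> {1..n}" "x \<in> A k" using Aun by blast
          show "x \<in> (\<Union>k\<in>{1..n-1}. C k)"
          proof (cases "k = j")
            case False
            then obtain k' where k': "k' \<in> {1..n-1}" "\<sigma> k' = k" using pre k by blast
            then have "x \<in> C k'" using x k unfolding C_def by auto
            then show ?thesis using k' by blast
          next
            case True
            show ?thesis
            proof (cases "x \<in> g ` (B - A j)")
              case False
              then have "x \<in> C 1" using x k True unfolding C_def L_def by auto
              then show ?thesis using n2 by auto
            next
              case True
              then obtain b where b: "b \<in> B - A j" "x = g b" by auto
              then obtain kb where kb: "kb \<in> {1..n}" "b \<in> A kb" using Aun assms(3) by blast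
              then have "kb \<noteq> j" using b by auto
              then obtain k' where k': "k' \<in> {1..n-1}" "\<sigma> k' = kb" using pre kb by blast
              then have "x \<in> C k'" using b kb unfolding C_def by auto
              then show ?thesis using k' by blast
            qed
          qed
        qed
      qed
    qed
    have Cval: "val v a (C k) \<ge> mms v a n {1..m}" if k: "k \<in> {1..n-1}" for k
    proof -
      let ?K = "A (\<sigma> k)"
      have aN: "a \<in> {1..n}" using a by auto
      have finK: "finite ?K" using Asub[OF \<sigma>in(1)[OF k]] finite_subset by blast
      have finC: "finite (C k)" using Csub[OF k] finite_subset by blast
      have nonneg: "\<And>x. x \<in> {1..m} \<Longrightarrow> 0 \<le> v a x" using assms(1) aN unfolding ordered_instance_def by auto
      have injK: "inj_on g (?K \<inter> B)" using g(1) AB[OF k] inj_on_subset by blast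
      have "val v a ?K = sum (v a) ((?K - B) \<union> (?K \<inter> B))"
        unfolding val_def by (rule arg_cong[where f="sum (v a)"]) blast
      also have "\<dots> = sum (v a) (?K - B) + sum (v a) (?K \<inter> B)"
        by (rule sum.union_disjoint) (use finK in auto)
      also have "sum (v a) (?K \<inter> B) \<le> sum (v a) (g ` (?K \<inter> B))"
      proof -
        have "sum (v a) (?K \<inter> B) \<le> sum (\<lambda>x. v a (g x)) (?K \<inter> B)"
        proof (rule sum_mono)
          fix x assume x: "x \<in> ?K \<inter> B"
          have "g x \<in> A j" using x gsub[OF k] by blast
          then have "1 \<le> g x" using Asub[OF j] by auto
          moreover have "g x \<le> x" using x AB[OF k] g(3) by blast
          moreover have "x \<le> m" using x assms(3) by auto
          ultimately show "v a x \<le> v a (g x)" by (rule ordered_mono[OF assms(1) aN])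
        qed
        also have "\<dots> = sum (v a) (g ` (?K \<inter> B))" using sum.reindex[OF injK, of "v a"] by simp
        finally show ?thesis .
      qed
      also have "sum (v a) (?K - B) + sum (v a) (g ` (?K \<inter> B)) = sum (v a) ((?K - B) \<union> g ` (?K \<inter> B))"
      proof -
        have "?K \<inter> A j = {}" using Adisj[OF \<sigma>in(1)[OF k] j \<sigma>in(2)[OF k]] .
        then have "(?K - B) \<inter> g ` (?K \<inter> B) = {}" using gsub[OF k] by blast
        then show ?thesis using finK by (simp add: sum.union_disjoint)
      qed
      also have "\<dots> \<le> sum (v a) (C k)"
        by (rule sum_mono2[OF finC]) (use Csub[OF k] nonneg in \<open>auto simp: C_def\<close>)
      finally have "val v a ?K \<le> val v a (C k)" unfolding val_def by simp
      moreover have "mms v a n {1..m} \<le> val v a ?K" using Aval \<sigma>in(1)[OF k] by blast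
      ultimately show ?thesis by linarith
    qed
    show ?thesis
      by (rule mms_ge[OF _ isp]) (use n2 Cval in auto)
  qed
  show ?thesis
  proof -
    have e: "\<exists>Bs. (\<forall>a\<in>{i}. Bs a \<subseteq> B) \<and>
           (\<forall>a\<in>{i}. \<forall>a'\<in>{i}. a \<noteq> a' \<longrightarrow> Bs a \<inter> Bs a' = {}) \<and>
           (\<Union>a\<in>{i}. Bs a) = B \<and>
           (\<forall>a\<in>{i}. val v a (Bs a) \<ge> mms v a n {1..m})"
      by (rule exI[of _ "\<lambda>_. B"]) (use assms(4) in simp)
    have r: "\<forall>a\<in>{1..n} - {i}. mms v a (n - card {i}) ({1..m} - B) \<ge> mms v a n {1..m}"
      using red by simp
    show ?thesis unfolding valid_reduction_def using e r assms(2,3) by blast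
  qed
qed

end
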